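(* Let $q$ be a prime power with $4\mid(q-1)$, $n\ge1$, let $\mathscr{C}\subseteq\mathrm{GF}(q^2)^n$ be a scalable code and let $\mathscr{B}$ be a basis of $\mathrm{GF}(q^2)$ over $\mathrm{GF}(q)$. If $\mathrm{Im}_{\mathscr{B}}(\mathscr{C})\subseteq\mathrm{GF}(q)^{2n}$ is self-orthogonal w.r.t. the canonical inner product $\sum_{i=1}^{2n}x_iy_i$, then $\mathscr{C}$ is self-orthogonal w.r.t. the canonical inner product $\sum_{i=1}^n x_iy_i$ on $\mathrm{GF}(q^2)^n$.
   Context: $\mathrm{Tr}:\mathrm{GF}(q^2)\to\mathrm{GF}(q)$, $\mathrm{Tr}(a)=a+a^q$. The dual basis of a basis $\{\gamma_1,\gamma_2\}$ is the unique basis $\{\beta_1,\beta_2\}$ with $\mathrm{Tr}(\gamma_i\beta_j)=\delta_{ij}$. A code $\mathscr{C}\subseteq\mathrm{GF}(q^2)^n$ is scalable if $x\in\mathscr{C}\Rightarrow\alpha x\in\mathscr{C}$ for all $\alpha\in\mathrm{GF}(q^2)$. For a basis $\mathscr{B}$ with dual basis $\{\beta_1,\beta_2\}$, $\mathrm{Im}_{\mathscr{B}}(\mathscr{C})=\{(\mathrm{Tr}(\beta_1x_1),\ldots,\mathrm{Tr}(\beta_1x_n),\mathrm{Tr}(\beta_2x_1),\ldots,\mathrm{Tr}(\beta_2x_n)):x\in\mathscr{C}\}$. A code $D$ is self-orthogonal w.r.t. a form $g$ if $g(x,y)=0$ for all $x,y\in D$. *)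

theory Defs
  imports "HOL-Computational_Algebra.Primes"
begin

text \<open>We model GF(q^2) as a finite field type 'a with CARD('a) = q^2.
  The subfield GF(q) is the set of fixed points of the Frobenius x \<mapsto> x^q.\<close>

definition subGF :: "nat \<Rightarrow> ('a::field) set" where
  "subGF q = {x. x ^ q = x}"

definition Tr :: "nat \<Rightarrow> 'a::field \<Rightarrow> 'a" where
  "Tr q a = a + a ^ q"

definition is_basis2 :: "nat \<Rightarrow> 'a::field \<Rightarrow> 'a \<Rightarrow> bool" where
  "is_basis2 q g1 g2 \<longleftrightarrow>
     (\<forall>a\<in>subGF q. \<forall>b\<in>subGF q. a * g1 + b * g2 = 0 \<longrightarrow> a = 0 \<and> b = 0) \<and>
     (\<forall>x. \<exists>a\<in>subGF q. \<exists>b\<in>subGF q. x = a * g1 + b * g2)"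

definition is_dual_basis2 :: "nat \<Rightarrow> 'a::field \<Rightarrow> 'a \<Rightarrow> 'a \<Rightarrow> 'a \<Rightarrow> bool" where
  "is_dual_basis2 q g1 g2 b1 b2 \<longleftrightarrow>
     Tr q (g1 * b1) = 1 \<and> Tr q (g1 * b2) = 0 \<and> Tr q (g2 * b1) = 0 \<and> Tr q (g2 * b2) = 1"

definition scalable :: "('a::field) list set \<Rightarrow> bool" where
  "scalable C \<longleftrightarrow> (\<forall>x\<in>C. \<forall>\<alpha>. map (\<lambda>c. \<alpha> * c) x \<in> C)"

definition ImB :: "nat \<Rightarrow> 'a::field \<Rightarrow> 'a \<Rightarrow> 'a list set \<Rightarrow> 'a list set" where
  "ImB q b1 b2 C =
     (\<lambda>x. map (\<lambda>c. Tr q (b1 * c)) x @ map (\<lambda>c. Tr q (b2 * c)) x) ` C"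

definition inner :: "'a::comm_ring list \<Rightarrow> 'a list \<Rightarrow> 'a" where
  "inner x y = (\<Sum>i<length x. x ! i * y ! i)"

definition self_orthogonal :: "'a::comm_ring list set \<Rightarrow> bool" where
  "self_orthogonal D \<longleftrightarrow> (\<forall>x\<in>D. \<forall>y\<in>D. inner x y = 0)"

end

theory Submission
  imports Defs "HOL-Computational_Algebra.Polynomial"
begin

lemma key:
  fixes U V :: "'a::{field,finite}"
  assumes all: "\<forall>x::'a. U*x + V*x^q = 0" and card: "card (UNIV::'a set) = q^2" and q: "q \<ge> 2"
  shows "U = 0"
proof -
  define p where "p = monom U 1 + monom V q"
  have ev: "poly p x = U*x + V*x^q" for x by (simp add: p_def poly_monom)
  have "p = 0"
  proof (rule ccontr)
    assume "p \<noteq> 0"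
    hence "card {x. poly p x = 0} \<le> degree p" by (rule card_poly_roots_bound)
    moreover have "{x. poly p x = 0} = UNIV" using all ev by auto
    moreover have "degree p \<le> q" unfolding p_def using q
      by (intro degree_add_le order.trans[OF degree_monom_le]) auto
    moreover have "q < q^2" using q by (simp add: power2_eq_square)
    ultimately show False using card by simp
  qed
  hence "coeff p 1 = 0" by simp
  thus ?thesis using q by (simp add: p_def)
qed

lemma inner_append:
  assumes "length a = length c" "length b = length d"
  shows "inner (a @ b) (c @ d) = inner a c + inner b d"
proof -
  let ?f = "\<lambda>x. (a @ b) ! x * (c @ d) ! x"
  have "inner (a @ b) (c @ d) = (\<Sum>x = 0..<length a + length b. ?f x)"
    unfolding inner_def by (simp add: lessThan_atLeast0)
  also have "\<dots> = (\<Sum>x = 0..<length a. ?f x) + (\<Sum>x = length a..<length a + length b. ?f x)"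
    by (rule sum.atLeastLessThan_concat[symmetric]) auto
  also have "(\<Sum>x = 0..<length a. ?f x) = inner a c"
    unfolding inner_def lessThan_atLeast0 using assms by (intro sum.cong) (auto simp: nth_append)
  also have "(\<Sum>x = length a..<length a + length b. ?f x) = (\<Sum>x = 0..<length b. ?f (x + length a))"
    using sum.shift_bounds_nat_ivl[of ?f 0 "length a" "length b"] by (simp add: add.commute)
  also have "\<dots> = inner b d"
    unfolding inner_def lessThan_atLeast0 using assms by (intro sum.cong) (auto simp: nth_append)
  finally show ?thesis .
qed

theorem proposition4:
  fixes q n :: nat
    and C :: "('a::{field,finite}) list set"
    and g1 g2 b1 b2 :: "'a"
  assumes "\<exists>p k. prime p \<and> k > 0 \<and> q = p ^ k"
    and "card (UNIV :: 'a set) = q ^ 2"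
    and "4 dvd (q - 1)"
    and "n \<ge> 1"
    and "\<forall>x\<in>C. length x = n"
    and "scalable C"
    and "is_basis2 q g1 g2"
    and "is_dual_basis2 q g1 g2 b1 b2"
    and "self_orthogonal (ImB q b1 b2 C)"
  shows "self_orthogonal C"
proof -
  note card = assms(2)
  have q2: "q \<ge> 2"
  proof (rule ccontr)
    assume "\<not> q \<ge> 2"
    hence "q = 0 \<or> q = 1" by auto
    moreover have "card (UNIV :: 'a set) \<ge> 2"
    proof -
      have "card {0::'a, 1} \<le> card (UNIV :: 'a set)" by (rule card_mono) auto
      thus ?thesis by simp
    qed
    ultimately show False using card by auto
  qed
  obtain m where "q - 1 = 4 * m" using assms(3) by (auto elim: dvdE)
  hence qm: "q = 4 * m + 1" using q2 by simp
  have dual: "Tr q (g1 * b1) = 1" "Tr q (g1 * b2) = 0" "Tr q (g2 * b2) = 1"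
    using assms(8) unfolding is_dual_basis2_def by auto
  have b2nz: "b2 \<noteq> 0"
  proof
    assume "b2 = 0"
    with dual(3) q2 show False by (simp add: Tr_def power_0_left)
  qed
  have Anz: "b1^2 + b2^2 \<noteq> 0"
  proof
    assume h: "b1^2 + b2^2 = 0"
    define c where "c = b1 / b2"
    have b1c: "b1 = c * b2" using b2nz by (simp add: c_def)
    have "b2^2 * (c^2 + 1) = 0" using h unfolding b1c by (simp add: power_mult_distrib algebra_simps)
    hence "c^2 + 1 = 0" using b2nz by simp
    hence c2: "c^2 = -1" by (simp add: eq_neg_iff_add_eq_0)
    have c4: "c^4 = 1" proof - have "c^4 = (c^2)^2" by (simp flip: power_mult) thus ?thesis using c2 by simp qed
    have cq: "c^q = c" unfolding qm by (simp add: power_add power_mult c4)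
    have "Tr q (g1 * b1) = c * Tr q (g1 * b2)"
      unfolding Tr_def b1c by (simp add: power_mult_distrib cq algebra_simps)
    with dual show False by simp
  qed
  show ?thesis unfolding self_orthogonal_def
  proof (intro ballI)
    fix x y assume x: "x \<in> C" and y: "y \<in> C"
    have lx: "length x = n" and ly: "length y = n" using x y assms(5) by auto
    define W where "W = (\<lambda>\<gamma>. \<Sum>i<n. b1 * x!i * Tr q (b1 * (\<gamma> * y!i)) + b2 * x!i * Tr q (b2 * (\<gamma> * y!i)))"
    define W' where "W' = (\<lambda>\<gamma>. \<Sum>i<n. b1^q * (x!i)^q * Tr q (b1 * (\<gamma> * y!i)) + b2^q * (x!i)^q * Tr q (b2 * (\<gamma> * y!i)))"
    have W0: "W \<gamma> = 0" for \<gamma>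
    proof (rule key[OF _ card q2])
      show "\<forall>\<alpha>. W \<gamma> * \<alpha> + W' \<gamma> * \<alpha> ^ q = 0"
      proof
        fix \<alpha> :: 'a
        let ?xa = "map (\<lambda>c. \<alpha> * c) x" and ?yg = "map (\<lambda>c. \<gamma> * c) y"
        have "?xa \<in> C" "?yg \<in> C" using x y assms(6) unfolding scalable_def by auto
        hence "inner (map (\<lambda>c. Tr q (b1 * c)) ?xa @ map (\<lambda>c. Tr q (b2 * c)) ?xa)
                     (map (\<lambda>c. Tr q (b1 * c)) ?yg @ map (\<lambda>c. Tr q (b2 * c)) ?yg) = 0"
          using assms(9) unfolding self_orthogonal_def ImB_def by blast
        hence "inner (map (\<lambda>c. Tr q (b1 * c)) ?xa) (map (\<lambda>c. Tr q (b1 * c)) ?yg)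
             + inner (map (\<lambda>c. Tr q (b2 * c)) ?xa) (map (\<lambda>c. Tr q (b2 * c)) ?yg) = 0"
          using lx ly by (simp add: inner_append)
        hence "(\<Sum>i<n. Tr q (b1 * (\<alpha> * x!i)) * Tr q (b1 * (\<gamma> * y!i)))
             + (\<Sum>i<n. Tr q (b2 * (\<alpha> * x!i)) * Tr q (b2 * (\<gamma> * y!i))) = 0"
          using lx ly by (simp add: inner_def)
        moreover have "(\<Sum>i<n. Tr q (b1 * (\<alpha> * x!i)) * Tr q (b1 * (\<gamma> * y!i)))
             + (\<Sum>i<n. Tr q (b2 * (\<alpha> * x!i)) * Tr q (b2 * (\<gamma> * y!i)))
             = W \<gamma> * \<alpha> + W' \<gamma> * \<alpha> ^ q"
          unfolding W_def W'_def sum_distrib_right sum.distrib[symmetric]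
          by (intro sum.cong refl) (simp add: Tr_def power_mult_distrib algebra_simps)
        ultimately show "W \<gamma> * \<alpha> + W' \<gamma> * \<alpha> ^ q = 0" by simp
      qed
    qed
    define V where "V = (\<Sum>i<n. b1 * b1^q * x!i * (y!i)^q + b2 * b2^q * x!i * (y!i)^q)"
    have "(b1^2 + b2^2) * inner x y = 0"
    proof (rule key[OF _ card q2])
      show "\<forall>\<gamma>. (b1^2 + b2^2) * inner x y * \<gamma> + V * \<gamma> ^ q = 0"
      proof
        fix \<gamma> :: 'a
        have "W \<gamma> = (b1^2 + b2^2) * inner x y * \<gamma> + V * \<gamma> ^ q"
          unfolding W_def V_def inner_def lx sum_distrib_right sum_distrib_left sum.distrib[symmetric]
          by (intro sum.cong refl) (simp add: Tr_def power_mult_distrib algebra_simps power2_eq_square)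
        thus "(b1^2 + b2^2) * inner x y * \<gamma> + V * \<gamma> ^ q = 0" using W0 by simp
      qed
    qed
    thus "inner x y = 0" using Anz by simp
  qed
qed

end
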